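(* Let $f_0:\mathbb{T}\times\mathbb{R}\to\mathbb{T}\times\mathbb{R}$ be the map $(\psi,w)\mapsto(\psi_1,w_1)$ with $\psi_1=\psi+w$, $w_1=w+2\pi(\cos\psi_1-1)$ (i.e. $f_\mu$ with $\mu=0$). Then the fixed point $(0,0)$ is locally unstable under $f_0$.
   Context: $\mathbb{T}=\mathbb{R}/2\pi\mathbb{Z}$. A fixed point $p_{\rm s}$ is locally stable if for every $\epsilon>0$ there exists $\delta>0$ such that $\|p-p_{\rm s}\|<\delta$ implies $\|f^n(p)-p_{\rm s}\|<\epsilon$ for all $n\in\mathbb{Z}$; otherwise it is locally unstable. *)

theory Defs
  imports Complex_Main
begin

text \<open>Points of T x R are represented by lifts (psi, w) in R x R; psi is read modulo 2 pi.
  The map is well defined on T x R since cos is 2 pi periodic.\<close>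

definition f0 :: "real \<times> real \<Rightarrow> real \<times> real" where
  "f0 p = (let psi1 = fst p + snd p in (psi1, snd p + 2 * pi * (cos psi1 - 1)))"

definition f0_inv :: "real \<times> real \<Rightarrow> real \<times> real" where
  "f0_inv q = (let w = snd q - 2 * pi * (cos (fst q) - 1) in (fst q - w, w))"

definition f0_iter :: "int \<Rightarrow> real \<times> real \<Rightarrow> real \<times> real" where
  "f0_iter n = (if 0 \<le> n then f0 ^^ nat n else f0_inv ^^ nat (- n))"

definition tdist0 :: "real \<Rightarrow> real" where
  "tdist0 x = (INF k::int. \<bar>x - 2 * pi * of_int k\<bar>)"

definition pnorm :: "real \<times> real \<Rightarrow> real" where
  "pnorm p = sqrt ((tdist0 (fst p))\<^sup>2 + (snd p)\<^sup>2)"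

definition locally_stable_f0 :: "real \<times> real \<Rightarrow> bool" where
  "locally_stable_f0 ps \<longleftrightarrow>
     (\<forall>\<epsilon>>0. \<exists>\<delta>>0. \<forall>p. pnorm (fst p - fst ps, snd p - snd ps) < \<delta> \<longrightarrow>
        (\<forall>n::int. pnorm (fst (f0_iter n p) - fst ps, snd (f0_iter n p) - snd ps) < \<epsilon>))"

end

theory Submission
  imports Defs
begin

lemma tdist0_zero: "tdist0 0 = 0"
proof -
  have bb: "bdd_below (range (\<lambda>k::int. \<bar>0 - 2 * pi * of_int k\<bar>))"
    by (rule bdd_belowI[of _ 0]) auto
  have "tdist0 0 \<le> \<bar>0 - 2 * pi * of_int (0::int)\<bar>"
    unfolding tdist0_def by (rule cINF_lower[OF bb]) simp
  moreover have "0 \<le> tdist0 0"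
    unfolding tdist0_def by (rule cINF_greatest) auto
  ultimately show ?thesis by simp
qed

lemma tdist0_ge1: assumes "-2 \<le> x" "x \<le> -1" shows "1 \<le> tdist0 x"
  unfolding tdist0_def
proof (rule cINF_greatest)
  fix k :: int
  show "1 \<le> \<bar>x - 2 * pi * of_int k\<bar>"
  proof (cases "k \<ge> 0")
    case True
    hence "0 \<le> 2 * pi * of_int k" by simp
    thus ?thesis using assms by linarith
  next
    case False
    hence "of_int k \<le> (-1::real)" by simp
    hence "2 * pi * of_int k \<le> 2 * pi * (-1)"
      by (intro mult_left_mono) auto
    thus ?thesis using assms pi_ge_two by linarith
  qed
qed simp

lemma tdist0_le_pnorm: "tdist0 x \<le> pnorm (x, y)"
  unfolding pnorm_def by (simp add: real_sqrt_sum_squares_ge1)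

lemma abs_le_pnorm: "\<bar>y\<bar> \<le> pnorm (x, y)"
  proof -
  have "sqrt (y\<^sup>2) \<le> sqrt ((tdist0 x)\<^sup>2 + y\<^sup>2)" by (intro real_sqrt_le_mono) simp
  thus ?thesis unfolding pnorm_def by simp
qed

lemma f0_pair: "f0 (a, b) = (a + b, b + 2 * pi * (cos (a + b) - 1))"
  unfolding f0_def Let_def by simp

theorem mainTheorem2:
  shows "f0 (0, 0) = (0, 0) \<and> \<not> locally_stable_f0 (0, 0)"
proof
  show "f0 (0, 0) = (0, 0)" by (simp add: f0_pair)
next
  show "\<not> locally_stable_f0 (0, 0)"
  proof
    assume "locally_stable_f0 (0, 0)"
    then obtain \<delta> where d: "\<delta> > 0" and H: "\<And>p. pnorm (fst p, snd p) < \<delta> \<Longrightarrow>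
        (\<forall>n::int. pnorm (fst (f0_iter n p), snd (f0_iter n p)) < 1)"
    proof -
      from \<open>locally_stable_f0 (0, 0)\<close> obtain \<delta> where "\<delta> > 0" and
        "\<forall>p. pnorm (fst p - 0, snd p - 0) < \<delta> \<longrightarrow>
          (\<forall>n::int. pnorm (fst (f0_iter n p) - 0, snd (f0_iter n p) - 0) < 1)"
        unfolding locally_stable_f0_def by (metis fst_conv snd_conv zero_less_one)
      then show ?thesis using that by (simp add: split_paired_all)
    qed
    define p where "p = (0::real, - \<delta> / 2)"
    have "pnorm (fst p, snd p) = \<delta> / 2"
      using d unfolding p_def pnorm_def by (simp add: tdist0_zero)
    hence all: "\<forall>n::int. pnorm (fst (f0_iter n p), snd (f0_iter n p)) < 1"
      using H d by simp
    define a where "a m = (f0 ^^ m) p" for m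
    have bnd: "pnorm (fst (a m), snd (a m)) < 1" for m
      using all[rule_format, of "int m"] unfolding a_def f0_iter_def by simp
    have step: "a (Suc m) = (fst (a m) + snd (a m), snd (a m) + 2 * pi * (cos (fst (a m) + snd (a m)) - 1))" for m
      unfolding a_def by (simp add: f0_pair[symmetric])
    have wneg: "snd (a m) \<le> - \<delta> / 2" for m
    proof (induction m)
      case 0 show ?case by (simp add: a_def p_def)
    next
      case (Suc m)
      have "2 * pi * (cos (fst (a m) + snd (a m)) - 1) \<le> 0"
        by (simp add: mult_nonneg_nonpos)
      thus ?case using Suc step[of m] by simp
    qed
    have wgt: "snd (a m) > -1" for m
      using abs_le_pnorm[of "snd (a m)" "fst (a m)"] bnd[of m] by linarith
    have psi_ge: "fst (a m) \<ge> -1" for m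
    proof (induction m)
      case 0 show ?case by (simp add: a_def p_def)
    next
      case (Suc m)
      have e: "fst (a (Suc m)) = fst (a m) + snd (a m)" using step[of m] by simp
      show ?case
      proof (rule ccontr)
        assume "\<not> ?case"
        hence "1 \<le> tdist0 (fst (a (Suc m)))"
          using e Suc wgt[of m] by (intro tdist0_ge1) linarith+
        moreover have "tdist0 (fst (a (Suc m))) < 1"
          using tdist0_le_pnorm bnd[of "Suc m"] by (meson le_less_trans)
        ultimately show False by simp
      qed
    qed
    have psi_le: "fst (a m) \<le> - real m * \<delta> / 2" for m
    proof (induction m)
      case 0 show ?case by (simp add: a_def p_def)
    next
      case (Suc m)
      have "fst (a (Suc m)) = fst (a m) + snd (a m)" using step[of m] by simp
      thus ?case using Suc wneg[of m] by (simp add: algebra_simps)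
    qed
    obtain m :: nat where "real m > 4 / \<delta>" using reals_Archimedean2 by blast
    hence "real m * \<delta> > 4" using d by (simp add: field_simps)
    thus False using psi_le[of m] psi_ge[of m] by linarith
  qed
qed

end
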